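(* Let $G$ be a finite group, let $s \in G^{\#}$ and let $H \in \mathcal{M}(G,s)$ with $b(G,G/H) = b$. Then any total dominating set for $\Gamma(G)$ consisting only of conjugates of $s$ has size at least $b$.
   Context: $G^{\#}$ is the set of non-identity elements of $G$. The generating graph $\Gamma(G)$ has vertex set $G^{\#}$, with $x,y$ adjacent iff $G=\langle x,y\rangle$. A subset $S\subseteq G^{\#}$ is a total dominating set for $\Gamma(G)$ if for every $g\in G^{\#}$ there exists $s\in S$ with $G=\langle g,s\rangle$. $\mathcal{M}(G,g)$ denotes the set of maximal subgroups of $G$ containing $g$. For a group acting faithfully on a finite set $\Omega$, a base is a subset of $\Omega$ whose pointwise stabiliser is trivial and $b(G,\Omega)$ is the minimal size of a base; here $G$ acts on the coset space $G/H$, and $b(G,G/H)\leqslant c$ iff there exist $g_1,\dots,g_c\in G$ with $\bigcap_i H^{g_i}=1$. *)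

theory Defs
  imports "HOL-Algebra.Algebra"
begin

definition maximal_subgroup :: "('a, 'b) monoid_scheme \<Rightarrow> 'a set \<Rightarrow> bool" where
  "maximal_subgroup G H \<longleftrightarrow> subgroup H G \<and> H \<noteq> carrier G \<and>
     (\<forall>K. subgroup K G \<longrightarrow> H \<subseteq> K \<longrightarrow> K = H \<or> K = carrier G)"

definition conj_subgroup :: "('a, 'b) monoid_scheme \<Rightarrow> 'a set \<Rightarrow> 'a \<Rightarrow> 'a set" where
  "conj_subgroup G H g = {inv\<^bsub>G\<^esub> g \<otimes>\<^bsub>G\<^esub> h \<otimes>\<^bsub>G\<^esub> g | h. h \<in> H}"

text \<open>There exist g_1,...,g_c in G with the intersection of the conjugates H^{g_i} trivial
  (for c = 0 the empty intersection is all of G).\<close>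
definition has_base_of_size :: "('a, 'b) monoid_scheme \<Rightarrow> 'a set \<Rightarrow> nat \<Rightarrow> bool" where
  "has_base_of_size G H c \<longleftrightarrow>
     (\<exists>gs. (\<forall>i<c. gs i \<in> carrier G) \<and>
           carrier G \<inter> (\<Inter>i<c. conj_subgroup G H (gs i)) = {\<one>\<^bsub>G\<^esub>})"

text \<open>b(G,G/H) = b: b is the minimal size of a base for the action of G on G/H.\<close>
definition base_size_is :: "('a, 'b) monoid_scheme \<Rightarrow> 'a set \<Rightarrow> nat \<Rightarrow> bool" where
  "base_size_is G H b \<longleftrightarrow> has_base_of_size G H b \<and> (\<forall>c<b. \<not> has_base_of_size G H c)"

text \<open>Total dominating set of the generating graph: S \<subseteq> G^# and every non-identity
  element together with some element of S generates G.\<close>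
definition total_dominating_set :: "('a, 'b) monoid_scheme \<Rightarrow> 'a set \<Rightarrow> bool" where
  "total_dominating_set G S \<longleftrightarrow> S \<subseteq> carrier G - {\<one>\<^bsub>G\<^esub>} \<and>
     (\<forall>g \<in> carrier G - {\<one>\<^bsub>G\<^esub>}. \<exists>t \<in> S. generate G {g, t} = carrier G)"

end

theory Submission
  imports Defs
begin

lemma t1:
  fixes G (structure)
  assumes G: "group G" and hc: "h \<in> carrier G" and x: "x \<in> carrier G"
  shows "inv (inv x \<otimes> h \<otimes> x) = inv x \<otimes> inv h \<otimes> x"
proof -
  interpret group G by fact
  have "inv (inv x \<otimes> h \<otimes> x) = inv x \<otimes> inv (inv x \<otimes> h)"
    using hc x by (simp only: inv_mult_group m_closed inv_closed)
  also have "\<dots> = inv x \<otimes> (inv h \<otimes> inv (inv x))"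
    using hc x by (simp only: inv_mult_group m_closed inv_closed)
  also have "\<dots> = inv x \<otimes> inv h \<otimes> x"
    using hc x by (simp only: m_assoc inv_inv m_closed inv_closed)
  finally show ?thesis .
qed
lemma t2:
  fixes G (structure)
  assumes G: "group G" and hc: "h \<in> carrier G" "k \<in> carrier G" and x: "x \<in> carrier G"
  shows "(inv x \<otimes> h \<otimes> x) \<otimes> (inv x \<otimes> k \<otimes> x) = inv x \<otimes> (h \<otimes> k) \<otimes> x"
proof -
  interpret group G by fact
  have "(inv x \<otimes> h \<otimes> x) \<otimes> (inv x \<otimes> k \<otimes> x) = inv x \<otimes> h \<otimes> (x \<otimes> inv x) \<otimes> k \<otimes> x"
    using hc x by (simp only: m_assoc m_closed inv_closed)
  also have "\<dots> = inv x \<otimes> (h \<otimes> k) \<otimes> x"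
    using hc x by (simp only: r_inv r_one m_assoc m_closed inv_closed)
  finally show ?thesis .
qed
lemma t3:
  fixes G (structure)
  assumes G: "group G" and hc: "h \<in> carrier G" "y \<in> carrier G" and x: "x \<in> carrier G"
   and e: "inv x \<otimes> y \<otimes> x = inv x \<otimes> h \<otimes> x"
  shows "y = h"
proof -
  interpret group G by fact
  have "inv x \<otimes> y = inv x \<otimes> h" using e hc x right_cancel by (meson inv_closed m_closed)
  then show ?thesis using hc x by (metis inv_closed l_inv l_one m_assoc)
qed
lemma conjI_mem:
  fixes G (structure)
  assumes "h \<in> H" shows "inv x \<otimes> h \<otimes> x \<in> conj_subgroup G H x"
  unfolding conj_subgroup_def using assms by (rule exI[where x=h, THEN CollectI[of "\<lambda>a. \<exists>h. a = _ h \<and> h \<in> H"], OF conjI[OF refl]])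
lemma conjE_mem:
  fixes G (structure)
  assumes "a \<in> conj_subgroup G H x" obtains h where "h \<in> H" "a = inv x \<otimes> h \<otimes> x"
  using assms unfolding conj_subgroup_def by blast
lemma conj_subgroup_is_subgroup:
  fixes G (structure)
  assumes G: "group G" and H: "subgroup H G" and x: "x \<in> carrier G"
  shows "subgroup (conj_subgroup G H x) G"
proof -
  interpret group G by fact
  have Hc: "H \<subseteq> carrier G" using H subgroup.subset by blast
  show ?thesis
  proof (rule subgroupI)
    show "conj_subgroup G H x \<subseteq> carrier G"
      unfolding conj_subgroup_def using Hc x by auto
    show "conj_subgroup G H x \<noteq> {}"
      unfolding conj_subgroup_def using subgroup.one_closed[OF H] by blast
  next
    fix a assume "a \<in> conj_subgroup G H x"
    then obtain h where h: "h \<in> H" "a = inv x \<otimes> h \<otimes> x" by (rule conjE_mem)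
    have hc: "h \<in> carrier G" using h(1) Hc by (rule subsetD[rotated])
    have "inv a = inv x \<otimes> inv h \<otimes> x" unfolding h(2) by (rule t1[OF G hc x])
    moreover have "inv h \<in> H" by (rule subgroup.m_inv_closed[OF H h(1)])
    ultimately show "inv a \<in> conj_subgroup G H x" using conjI_mem[of "inv h" H G x] by (simp only:)
  next
    fix a b assume "a \<in> conj_subgroup G H x" "b \<in> conj_subgroup G H x"
    then obtain h k where h: "h \<in> H" "a = inv x \<otimes> h \<otimes> x" and k: "k \<in> H" "b = inv x \<otimes> k \<otimes> x"
      by (meson conjE_mem)
    have hc: "h \<in> carrier G" "k \<in> carrier G" using h(1) k(1) Hc by (auto dest: subsetD)
    have "a \<otimes> b = inv x \<otimes> (h \<otimes> k) \<otimes> x" unfolding h(2) k(2) by (rule t2[OF G hc x])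
    moreover have "h \<otimes> k \<in> H" by (rule subgroup.m_closed[OF H h(1) k(1)])
    ultimately show "a \<otimes> b \<in> conj_subgroup G H x" using conjI_mem[of "h \<otimes> k" H G x] by (simp only:)
  qed
qed

lemma conj_subgroup_proper:
  fixes G (structure)
  assumes G: "group G" and H: "subgroup H G" and x: "x \<in> carrier G" and ne: "H \<noteq> carrier G"
  shows "conj_subgroup G H x \<noteq> carrier G"
proof
  interpret group G by fact
  assume eq: "conj_subgroup G H x = carrier G"
  have Hc: "H \<subseteq> carrier G" using H subgroup.subset by blast
  have "carrier G \<subseteq> H"
  proof
    fix y assume y: "y \<in> carrier G"
    have "inv x \<otimes> y \<otimes> x \<in> carrier G" using x y by (intro m_closed inv_closed)
    then have "inv x \<otimes> y \<otimes> x \<in> conj_subgroup G H x" using eq by simp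
    then obtain h where h: "h \<in> H" "inv x \<otimes> y \<otimes> x = inv x \<otimes> h \<otimes> x"
      by (rule conjE_mem)
    have "h \<in> carrier G" using h(1) Hc by (rule subsetD[rotated])
    then have "y = h" by (rule t3[OF G _ y x h(2)])
    then show "y \<in> H" using h(1) by (simp only:)
  qed
  then show False using ne subset_antisym[OF Hc] by simp
qed

theorem corollary2p3:
  fixes G :: "('a, 'b) monoid_scheme" and s :: 'a and H :: "'a set" and b :: nat and S :: "'a set"
  assumes "group G" and "finite (carrier G)"
    and "s \<in> carrier G" and "s \<noteq> \<one>\<^bsub>G\<^esub>"
    and "maximal_subgroup G H" and "s \<in> H"
    and "base_size_is G H b"
    and "total_dominating_set G S"
    and "\<forall>t \<in> S. \<exists>x \<in> carrier G. t = inv\<^bsub>G\<^esub> x \<otimes>\<^bsub>G\<^esub> s \<otimes>\<^bsub>G\<^esub> x"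
  shows "b \<le> card S"
proof (rule ccontr)
  interpret group G by fact
  assume "\<not> b \<le> card S"
  then have lt: "card S < b" by simp
  have HS: "subgroup H G" and Hne: "H \<noteq> carrier G"
    using assms(5) unfolding maximal_subgroup_def by auto
  have Ssub: "S \<subseteq> carrier G" using assms(8) unfolding total_dominating_set_def by auto
  have finS: "finite S" by (rule finite_subset[OF Ssub assms(2)])
  obtain f where f: "bij_betw f {0..<card S} S" using ex_bij_betw_nat_finite[OF finS] by blast
  have fS: "f i \<in> S" if "i < card S" for i
    using bij_betwE[OF f] that by simp
  define gs where "gs i = (SOME x. x \<in> carrier G \<and> f i = inv\<^bsub>G\<^esub> x \<otimes>\<^bsub>G\<^esub> s \<otimes>\<^bsub>G\<^esub> x)" for i
  have gs: "gs i \<in> carrier G \<and> f i = inv\<^bsub>G\<^esub> (gs i) \<otimes>\<^bsub>G\<^esub> s \<otimes>\<^bsub>G\<^esub> gs i" if "i < card S" for i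
  proof -
    have "\<exists>x\<in>carrier G. f i = inv\<^bsub>G\<^esub> x \<otimes>\<^bsub>G\<^esub> s \<otimes>\<^bsub>G\<^esub> x" using assms(9) fS[OF that] by (rule bspec)
    then have "\<exists>x. x \<in> carrier G \<and> f i = inv\<^bsub>G\<^esub> x \<otimes>\<^bsub>G\<^esub> s \<otimes>\<^bsub>G\<^esub> x" by (simp only: Bex_def)
    then show ?thesis unfolding gs_def by (rule someI_ex)
  qed
  have gsc: "gs i \<in> carrier G" if "i < card S" for i using gs[OF that] by (rule conjunct1)
  have "\<not> has_base_of_size G H (card S)" using assms(7) lt unfolding base_size_is_def by auto
  then have "\<not> ((\<forall>i<card S. gs i \<in> carrier G) \<and>
           carrier G \<inter> (\<Inter>i<card S. conj_subgroup G H (gs i)) = {\<one>\<^bsub>G\<^esub>})"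
    unfolding has_base_of_size_def by (rule contrapos_nn) (rule exI)
  then have neq: "carrier G \<inter> (\<Inter>i<card S. conj_subgroup G H (gs i)) \<noteq> {\<one>\<^bsub>G\<^esub>}"
    using gsc by auto
  have one_in: "\<one>\<^bsub>G\<^esub> \<in> conj_subgroup G H (gs i)" if "i < card S" for i
    by (rule subgroup.one_closed[OF conj_subgroup_is_subgroup[OF assms(1) HS gsc[OF that]]])
  define Xset where "Xset = carrier G \<inter> (\<Inter>i<card S. conj_subgroup G H (gs i))"
  have oneX: "\<one>\<^bsub>G\<^esub> \<in> Xset" unfolding Xset_def using one_in by simp
  have "\<not> Xset \<subseteq> {\<one>\<^bsub>G\<^esub>}"
  proof
    assume "Xset \<subseteq> {\<one>\<^bsub>G\<^esub>}"
    moreover have "{\<one>\<^bsub>G\<^esub>} \<subseteq> Xset" using oneX by simp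
    ultimately have "Xset = {\<one>\<^bsub>G\<^esub>}" by (rule subset_antisym)
    then show False using neq unfolding Xset_def by simp
  qed
  then obtain g where gX: "g \<in> Xset" and g1: "g \<noteq> \<one>\<^bsub>G\<^esub>" by (auto simp only: subset_iff singleton_iff)
  have gc: "g \<in> carrier G - {\<one>\<^bsub>G\<^esub>}" using gX g1 unfolding Xset_def by simp
  have gin: "g \<in> conj_subgroup G H (gs i)" if "i < card S" for i using gX that unfolding Xset_def by simp
  have "\<exists>t \<in> S. generate G {g, t} = carrier G"
    using assms(8) gc unfolding total_dominating_set_def by auto
  then obtain t where t: "t \<in> S" and gen: "generate G {g, t} = carrier G" by auto
  obtain i where i: "i < card S" "t = f i"
    using bij_betw_imp_surj_on[OF f] t by (metis atLeastLessThan_iff imageE)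
  have "t = inv\<^bsub>G\<^esub> (gs i) \<otimes>\<^bsub>G\<^esub> s \<otimes>\<^bsub>G\<^esub> gs i" using gs[OF i(1)] i(2) by simp
  then have tin: "t \<in> conj_subgroup G H (gs i)"
    using conjI_mem[of s H G "gs i", OF assms(6)] by (simp only:)
  have sg: "subgroup (conj_subgroup G H (gs i)) G"
    by (rule conj_subgroup_is_subgroup[OF assms(1) HS gsc[OF i(1)]])
  have "{g, t} \<subseteq> conj_subgroup G H (gs i)" using gin[OF i(1)] tin by simp
  then have "generate G {g, t} \<subseteq> conj_subgroup G H (gs i)"
    by (rule generate_subgroup_incl[OF _ sg])
  then have "conj_subgroup G H (gs i) = carrier G"
    using gen subgroup.subset[OF sg] by simp
  then show False using conj_subgroup_proper[OF assms(1) HS gsc[OF i(1)] Hne] by simp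
qed

end
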